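(* Let $(\varphi_\alpha)_{\alpha>0}$ be a non-linear regularizing filter satisfying Assumption B, let $(\delta_k)_k,(\alpha_k)_k$ be positive null sequences with $\delta_k^2/\alpha_k\to0$, and let $y\in\operatorname{ran}(\mathbf{A})$ with $\mathbf{T}_v^*(y)\in\operatorname{ran}(\Phi_{\tilde\alpha,\kappa})$ for some $\tilde\alpha>0$. Let $(y^k)_k$ be a sequence in $\mathbb{Y}$ with $\|y^k-y\|\le\delta_k$. Then $\mathbf{B}_{\alpha_k}(y^k)\rightharpoonup\mathbf{A}^+y$ weakly in $\mathbb{X}$ as $k\to\infty$.
   Context: $\mathbb{X},\mathbb{Y}$ are real Hilbert spaces and $\mathbf{A}\colon\mathbb{X}\to\mathbb{Y}$ is bounded linear with Moore–Penrose inverse $\mathbf{A}^+$. $\Lambda$ is an at most countable index set. A diagonal frame decomposition (DFD) of $\mathbf{A}$ is a triple $(u_\lambda,v_\lambda,\kappa_\lambda)_{\lambda\in\Lambda}$ such that $(u_\lambda)$ is a frame of $\ker(\mathbf{A})^\perp$, $(v_\lambda)$ is a frame of $\overline{\operatorname{ran}(\mathbf{A})}$, and $\kappa_\lambda>0$ with $\mathbf{A}^*v_\lambda=\kappa_\lambda u_\lambda$ for all $\lambda$; we fix such a DFD with $\sup_\lambda\kappa_\lambda<\infty$. $(\bar u_\lambda)$ is a dual frame of $(u_\lambda)$, i.e. $x=\sum_\lambda\langle x,u_\lambda\rangle\bar u_\lambda$ for all $x\in\ker(\mathbf{A})^\perp$. $\mathbf{T}_{\bar u}\colon\ell^2(\Lambda)\to\mathbb{X}$,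 $(c_\lambda)\mapsto\sum_\lambda c_\lambda\bar u_\lambda$, and $\mathbf{T}_v^*\colon\mathbb{Y}\to\ell^2(\Lambda)$, $y\mapsto(\langle y,v_\lambda\rangle)_\lambda$. $\mathbf{M}_\kappa\colon\ell^2(\Lambda)\to\ell^2(\Lambda)$, $(x_\lambda)\mapsto(\kappa_\lambda x_\lambda)$; $\mathbf{M}_\kappa^+$ is its Moore–Penrose inverse, with domain $\{(c_\lambda)\in\ell^2:(c_\lambda/\kappa_\lambda)\in\ell^2\}$ and $\mathbf{M}_\kappa^+((c_\lambda))=(c_\lambda/\kappa_\lambda)$. A non-linear regularizing filter is a family $(\varphi_\alpha)_{\alpha>0}$ of functions $\varphi_\alpha\colon(0,\infty)\times\mathbb{R}\to\mathbb{R}$ such that for all $\alpha,\kappa>0$: (F1) $\varphi_\alpha(\kappa,\cdot)$ is non-decreasing; (F2) $\varphi_\alpha(\kappa,\cdot)$ is 1-Lipschitz; (F3) $\varphi_\alpha(\kappa,0)=0$; (F4) $\lim_{\alpha\to0}\varphi_\alpha(\kappa,c)=c$ for all $c\in\mathbb{R}$. $\Phi_{\alpha,\kappa}\colon\ell^2(\Lambda)\to\ell^2(\Lambda)$, $(c_\lambda)\mapsto(\varphi_\alpha(\kappa_\lambda,c_\lambda))_\lambda$. Non-linear filtered DFD: $\operatorname{dom}(\mathbf{B}_\alpha)=\{y\in\mathbb{Y}:\Phi_{\alpha,\kappa}(\mathbf{T}_v^*y)\in\operatorname{dom}(\mathbf{M}_\kappa^+)\}$ and $\mathbf{B}_\alpha(y)=\sum_\lambda\kappa_\lambda^{-1}\varphi_\alpha(\kappa_\lambda,\langle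 y,v_\lambda\rangle)\bar u_\lambda=\mathbf{T}_{\bar u}\circ\mathbf{M}_\kappa^+\circ\Phi_{\alpha,\kappa}\circ\mathbf{T}_v^*(y)$. Assumption B: (B1) for all $\kappa>0$ and $x\in\mathbb{R}$, $(|\varphi_\alpha(\kappa,x)|)_{\alpha>0}$ is monotonically increasing as $\alpha\downarrow0$; (B2) there exist $d,e>0$ such that for all $\kappa,\alpha>0$, $x\in\mathbb{R}$: $|x|\le d\alpha/\kappa\Rightarrow|\varphi_\alpha(\kappa,x)|\le\frac{e\kappa}{\sqrt\alpha}|x|$. *)

theory Defs
  imports "HOL-Analysis.Analysis"
begin

definition orth_compl :: "'a::real_inner set \<Rightarrow> 'a set" where
  "orth_compl W = {x. \<forall>w\<in>W. inner x w = 0}"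

definition ker :: "('a \<Rightarrow> 'b::zero) \<Rightarrow> 'a set" where
  "ker A = {x. A x = 0}"

definition l2 :: "'i set \<Rightarrow> ('i \<Rightarrow> real) set" where
  "l2 \<Lambda> = {c. (\<lambda>l. (c l)\<^sup>2) summable_on \<Lambda>}"

definition is_frame :: "'a::real_inner set \<Rightarrow> ('i \<Rightarrow> 'a) \<Rightarrow> 'i set \<Rightarrow> bool" where
  "is_frame V u \<Lambda> \<longleftrightarrow> (\<forall>l\<in>\<Lambda>. u l \<in> V) \<and>
     (\<exists>a b. 0 < a \<and> a \<le> b \<and> (\<forall>x\<in>V. (\<lambda>l. (inner x (u l))\<^sup>2) summable_on \<Lambda> \<and>
        a * (norm x)\<^sup>2 \<le> (\<Sum>\<^sub>\<infinity>l\<in>\<Lambda>. (inner x (u l))\<^sup>2) \<and>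
        (\<Sum>\<^sub>\<infinity>l\<in>\<Lambda>. (inner x (u l))\<^sup>2) \<le> b * (norm x)\<^sup>2))"

text \<open>Diagonal frame decomposition (u, v, \<kappa>) of A with bounded \<kappa>.
  A* v_l = \<kappa>_l u_l is written out via the defining property of the adjoint.\<close>
definition is_DFD :: "('x::real_inner \<Rightarrow> 'y::real_inner) \<Rightarrow> 'i set \<Rightarrow>
    ('i \<Rightarrow> 'x) \<Rightarrow> ('i \<Rightarrow> 'y) \<Rightarrow> ('i \<Rightarrow> real) \<Rightarrow> bool" where
  "is_DFD A \<Lambda> u v \<kappa> \<longleftrightarrow> countable \<Lambda> \<and>
     is_frame (orth_compl (ker A)) u \<Lambda> \<and>
     is_frame (closure (range A)) v \<Lambda> \<and>
     (\<forall>l\<in>\<Lambda>. 0 < \<kappa> l \<and> (\<forall>x. inner (A x) (v l) = \<kappa> l * inner x (u l)))"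

definition is_dual_frame :: "'x::real_inner set \<Rightarrow> 'i set \<Rightarrow> ('i \<Rightarrow> 'x) \<Rightarrow> ('i \<Rightarrow> 'x) \<Rightarrow> bool" where
  "is_dual_frame V \<Lambda> u ub \<longleftrightarrow> is_frame V ub \<Lambda> \<and>
     (\<forall>x\<in>V. ((\<lambda>l. inner x (u l) *\<^sub>R ub l) has_sum x) \<Lambda>)"

text \<open>Moore-Penrose inverse: A^+ y is the unique x in ker(A)^perp with Ax - y orthogonal
  to ran(A) (i.e. A x = projection of y onto the closure of ran A);
  dom(A^+) = ran A + ran(A)^perp.\<close>
definition mp_inverse :: "('x::real_inner \<Rightarrow> 'y::real_inner) \<Rightarrow> 'y \<Rightarrow> 'x" where
  "mp_inverse A y = (THE x. x \<in> orth_compl (ker A) \<and> A x - y \<in> orth_compl (range A))"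

text \<open>Non-linear regularizing filter; \<phi> \<alpha> \<kappa> c stands for \<phi>_\<alpha>(\<kappa>, c).\<close>
definition nonlinear_reg_filter :: "(real \<Rightarrow> real \<Rightarrow> real \<Rightarrow> real) \<Rightarrow> bool" where
  "nonlinear_reg_filter \<phi> \<longleftrightarrow> (\<forall>\<alpha> \<kappa>. 0 < \<alpha> \<longrightarrow> 0 < \<kappa> \<longrightarrow>
       mono (\<phi> \<alpha> \<kappa>) \<and>
       (\<forall>x y. \<bar>\<phi> \<alpha> \<kappa> x - \<phi> \<alpha> \<kappa> y\<bar> \<le> \<bar>x - y\<bar>) \<and>
       \<phi> \<alpha> \<kappa> 0 = 0) \<and>
     (\<forall>\<kappa> c. 0 < \<kappa> \<longrightarrow> ((\<lambda>\<alpha>. \<phi> \<alpha> \<kappa> c) \<longlongrightarrow> c) (at_right 0))"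

definition assumption_B :: "(real \<Rightarrow> real \<Rightarrow> real \<Rightarrow> real) \<Rightarrow> bool" where
  "assumption_B \<phi> \<longleftrightarrow>
     (\<forall>\<kappa> x \<alpha> \<beta>. 0 < \<kappa> \<longrightarrow> 0 < \<alpha> \<longrightarrow> \<alpha> \<le> \<beta> \<longrightarrow> \<bar>\<phi> \<beta> \<kappa> x\<bar> \<le> \<bar>\<phi> \<alpha> \<kappa> x\<bar>) \<and>
     (\<exists>d e. 0 < d \<and> 0 < e \<and> (\<forall>\<kappa> \<alpha> x. 0 < \<kappa> \<longrightarrow> 0 < \<alpha> \<longrightarrow>
        \<bar>x\<bar> \<le> d * \<alpha> / \<kappa> \<longrightarrow> \<bar>\<phi> \<alpha> \<kappa> x\<bar> \<le> e * \<kappa> / sqrt \<alpha> * \<bar>x\<bar>))"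

text \<open>Coefficients M_\<kappa>^+ \<Phi>_{\<alpha>,\<kappa>} T_v^* y.\<close>
definition filt_coeffs :: "(real \<Rightarrow> real \<Rightarrow> real \<Rightarrow> real) \<Rightarrow> ('i \<Rightarrow> 'y::real_inner) \<Rightarrow>
    ('i \<Rightarrow> real) \<Rightarrow> real \<Rightarrow> 'y \<Rightarrow> 'i \<Rightarrow> real" where
  "filt_coeffs \<phi> v \<kappa> \<alpha> y = (\<lambda>l. \<phi> \<alpha> (\<kappa> l) (inner y (v l)) / \<kappa> l)"

text \<open>Domain of B_\<alpha>: \<Phi>_{\<alpha>,\<kappa>}(T_v^* y) \<in> dom(M_\<kappa>^+).\<close>
definition B_dom :: "(real \<Rightarrow> real \<Rightarrow> real \<Rightarrow> real) \<Rightarrow> 'i set \<Rightarrow> ('i \<Rightarrow> 'y::real_inner) \<Rightarrow>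
    ('i \<Rightarrow> real) \<Rightarrow> real \<Rightarrow> 'y set" where
  "B_dom \<phi> \<Lambda> v \<kappa> \<alpha> = {y. (\<lambda>l. \<phi> \<alpha> (\<kappa> l) (inner y (v l))) \<in> l2 \<Lambda> \<and>
                             filt_coeffs \<phi> v \<kappa> \<alpha> y \<in> l2 \<Lambda>}"

text \<open>Non-linear filtered DFD B_\<alpha>(y) = T_ub (M_\<kappa>^+ (\<Phi>_{\<alpha>,\<kappa>} (T_v^* y))).\<close>
definition B_op :: "(real \<Rightarrow> real \<Rightarrow> real \<Rightarrow> real) \<Rightarrow> 'i set \<Rightarrow> ('i \<Rightarrow> 'x::real_inner) \<Rightarrow>
    ('i \<Rightarrow> 'y::real_inner) \<Rightarrow> ('i \<Rightarrow> real) \<Rightarrow> real \<Rightarrow> 'y \<Rightarrow> 'x" where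
  "B_op \<phi> \<Lambda> ub v \<kappa> \<alpha> y = (\<Sum>\<^sub>\<infinity>l\<in>\<Lambda>. filt_coeffs \<phi> v \<kappa> \<alpha> y l *\<^sub>R ub l)"

definition weakly_converges :: "(nat \<Rightarrow> 'a::real_inner) \<Rightarrow> 'a \<Rightarrow> bool" where
  "weakly_converges xs x \<longleftrightarrow> (\<forall>z. (\<lambda>k. inner (xs k) z) \<longlonglongrightarrow> inner x z)"

end

theory Submission
  imports Defs
begin


lemma parallelogram_aux:
  fixes x a b :: "'a::real_inner"
  shows "(norm (a - b))\<^sup>2 = 2 * (norm (x - a))\<^sup>2 + 2 * (norm (x - b))\<^sup>2 - 4 * (norm (x - (1/2) *\<^sub>R (a + b)))\<^sup>2"
  by (simp add: power2_norm_eq_inner inner_diff_left inner_diff_right inner_add_left inner_add_right inner_commute algebra_simps)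

lemma proj_exists:
  fixes K :: "'a::{real_inner,complete_space} set" and x :: 'a
  assumes sK: "subspace K" and cK: "closed K"
  shows "\<exists>q\<in>K. \<forall>w\<in>K. inner (x - q) w = 0"
proof -
  define D where "D = (\<lambda>w. (norm (x - w))\<^sup>2) ` K"
  define d where "d = Inf D"
  have K0: "0 \<in> K" using sK by (simp add: subspace_0)
  have Dne: "D \<noteq> {}" using K0 by (auto simp: D_def)
  have Dbdd: "bdd_below D" by (auto simp: D_def intro!: bdd_belowI[of _ 0])
  have dle: "d \<le> (norm (x - w))\<^sup>2" if "w \<in> K" for w
    unfolding d_def using that Dbdd by (auto simp: D_def intro!: cInf_lower)
  have "\<exists>w\<in>K. (norm (x - w))\<^sup>2 < d + 1 / real (Suc n)" for n
  proof -
    have "Inf D < d + 1 / real (Suc n)" by (simp add: d_def)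
    then obtain t where "t \<in> D" "t < d + 1 / real (Suc n)"
      using cInf_lessD[OF Dne] by blast
    then show ?thesis by (auto simp: D_def)
  qed
  then obtain w where wK: "\<And>n. w n \<in> K" and wd: "\<And>n. (norm (x - w n))\<^sup>2 < d + 1 / real (Suc n)"
    by metis
  have mid: "(1/2) *\<^sub>R (w n + w m) \<in> K" for n m
    using sK wK by (simp add: subspace_add subspace_scale)
  have wdist: "(norm (w n - w m))\<^sup>2 \<le> 2 / real (Suc n) + 2 / real (Suc m)" for n m
  proof -
    have "(norm (w n - w m))\<^sup>2 = 2 * (norm (x - w n))\<^sup>2 + 2 * (norm (x - w m))\<^sup>2 - 4 * (norm (x - (1/2) *\<^sub>R (w n + w m)))\<^sup>2"
      by (rule parallelogram_aux)
    also have "\<dots> \<le> 2 * (d + 1 / real (Suc n)) + 2 * (d + 1 / real (Suc m)) - 4 * d"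
      using wd[of n] wd[of m] dle[OF mid[of n m]] by (smt (verit))
    finally show ?thesis by simp
  qed
  have "Cauchy w"
  proof (rule metric_CauchyI)
    fix e :: real assume e: "0 < e"
    obtain N :: nat where N: "4 / (e\<^sup>2) < real N" using reals_Archimedean2 by blast
    have e2: "0 < e\<^sup>2" using e by simp
    show "\<exists>M. \<forall>m\<ge>M. \<forall>n\<ge>M. dist (w m) (w n) < e"
    proof (intro exI allI impI)
      fix m n assume mn: "N \<le> m" "N \<le> n"
      have "2 / real (Suc m) \<le> 2 / real (Suc N)" "2 / real (Suc n) \<le> 2 / real (Suc N)"
        using mn by (auto intro!: divide_left_mono)
      moreover have "4 / real (Suc N) < e\<^sup>2"
      proof -
        have "4 / e\<^sup>2 < real (Suc N)" using N by simp
        then show ?thesis using e2 by (simp add: field_simps)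
      qed
      ultimately have "(norm (w m - w n))\<^sup>2 < e\<^sup>2" using wdist[of m n] by linarith
      then have "norm (w m - w n) < e" using e by (simp add: power_less_imp_less_base)
      then show "dist (w m) (w n) < e" by (simp add: dist_norm)
    qed
  qed
  then obtain q where wq: "w \<longlonglongrightarrow> q" using Cauchy_convergent_iff convergent_def by blast
  have qK: "q \<in> K" using cK wK wq closed_sequentially by blast
  have lim1: "(\<lambda>n. (norm (x - w n))\<^sup>2) \<longlonglongrightarrow> (norm (x - q))\<^sup>2"
    by (intro tendsto_intros wq)
  have lim2: "(\<lambda>n. d + 1 / real (Suc n)) \<longlonglongrightarrow> d + 0"
    by (intro tendsto_intros LIMSEQ_Suc[OF lim_1_over_n])
  have qmin: "(norm (x - q))\<^sup>2 \<le> d"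
    using LIMSEQ_le[OF lim1 lim2] wd less_imp_le by auto
  show ?thesis
  proof (intro bexI[OF _ qK] ballI)
    fix z assume zK: "z \<in> K"
    define p where "p = inner (x - q) z"
    define N where "N = inner z z"
    have key: "2 * t * p \<le> t\<^sup>2 * N" for t
    proof -
      have "q + t *\<^sub>R z \<in> K" using sK qK zK by (simp add: subspace_add subspace_scale)
      then have "(norm (x - q))\<^sup>2 \<le> (norm (x - (q + t *\<^sub>R z)))\<^sup>2" using dle[of "q + t *\<^sub>R z"] qmin by linarith
      then have "inner (x - q) (x - q) \<le> inner (x - (q + t *\<^sub>R z)) (x - (q + t *\<^sub>R z))"
        by (simp only: power2_norm_eq_inner)
      then show ?thesis
        by (simp add: p_def N_def inner_diff_left inner_diff_right inner_add_left inner_add_right inner_commute algebra_simps power2_eq_square)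
    qed
    show "inner (x - q) z = 0"
    proof (cases "N = 0")
      case True
      then have "z = 0" by (simp add: N_def)
      then show ?thesis by simp
    next
      case False
      then have Npos: "N > 0" by (simp add: N_def)
      have "2 * (p / N) * p \<le> (p / N)\<^sup>2 * N" by (rule key)
      then have "2 * p\<^sup>2 / N \<le> p\<^sup>2 / N" using Npos by (simp add: power2_eq_square field_simps)
      then have "p\<^sup>2 \<le> 0" using Npos by (simp add: divide_le_cancel)
      then show ?thesis by (simp add: p_def)
    qed
  qed
qed



lemma fin_le_infsum:
  fixes f :: "'i \<Rightarrow> real"
  assumes "f summable_on A" "\<And>x. x\<in>A \<Longrightarrow> 0 \<le> f x" "finite F" "F \<subseteq> A"
  shows "sum f F \<le> infsum f A"
proof -
  have "infsum f F \<le> infsum f A"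
    by (rule infsum_mono_neutral) (use assms in auto)
  then show ?thesis using assms by simp
qed

lemma tail_small:
  fixes f :: "'i \<Rightarrow> real"
  assumes sf: "f summable_on A" and nn: "\<And>x. x\<in>A \<Longrightarrow> 0 \<le> f x" and e: "e > 0"
  shows "\<exists>F0. finite F0 \<and> F0 \<subseteq> A \<and> (\<forall>G. finite G \<longrightarrow> G \<subseteq> A - F0 \<longrightarrow> sum f G < e)"
proof -
  obtain F0 where F0: "finite F0" "F0 \<subseteq> A" "dist (sum f F0) (infsum f A) \<le> e/2"
    using infsum_finite_approximation[OF sf, of "e/2"] e by auto
  show ?thesis
  proof (intro exI[of _ F0] conjI allI impI F0(1,2))
    fix G assume G: "finite G" "G \<subseteq> A - F0"
    have "sum f (G \<union> F0) = sum f G + sum f F0"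
      using G F0 by (intro sum.union_disjoint) auto
    moreover have "sum f (G \<union> F0) \<le> infsum f A"
      using G F0 by (intro fin_le_infsum[OF sf nn]) auto
    moreover have "\<bar>sum f F0 - infsum f A\<bar> \<le> e/2"
      using F0(3) by (simp add: dist_real_def)
    then have "- (sum f F0 - infsum f A) \<le> e/2" by (rule abs_le_D2)
    ultimately show "sum f G < e" using e by linarith
  qed
qed

lemma summable_cauchy:
  fixes f :: "'i \<Rightarrow> 'b::{real_normed_vector,complete_space}"
  assumes crit: "\<And>e. e>0 \<Longrightarrow> \<exists>F0. finite F0 \<and> F0 \<subseteq> A \<and> (\<forall>G. finite G \<longrightarrow> G \<subseteq> A - F0 \<longrightarrow> norm (sum f G) < e)"
  shows "f summable_on A"
proof -
  let ?F = "filtermap (sum f) (finite_subsets_at_top A)"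
  have cf: "cauchy_filter ?F"
    unfolding cauchy_filter_metric_filtermap
  proof (intro allI impI)
    fix e :: real assume e: "e > 0"
    then obtain F0 where F0: "finite F0" "F0 \<subseteq> A" "\<And>G. finite G \<Longrightarrow> G \<subseteq> A - F0 \<Longrightarrow> norm (sum f G) < e/2"
      using crit[of "e/2"] by auto
    define P where "P = (\<lambda>F. finite F \<and> F0 \<subseteq> F \<and> F \<subseteq> A)"
    have ev: "eventually P (finite_subsets_at_top A)"
      unfolding eventually_finite_subsets_at_top by (rule exI[of _ F0]) (use F0 in \<open>auto simp: P_def\<close>)
    have "dist (sum f x) (sum f y) < e" if "P x" "P y" for x y
    proof -
      have x: "sum f x = sum f (x - F0) + sum f F0" by (rule sum.subset_diff) (use that(1) in \<open>auto simp: P_def\<close>)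
      have y: "sum f y = sum f (y - F0) + sum f F0" by (rule sum.subset_diff) (use that(2) in \<open>auto simp: P_def\<close>)
      have "norm (sum f (x - F0)) < e/2" using that(1) by (intro F0(3)) (auto simp: P_def)
      moreover have "norm (sum f (y - F0)) < e/2" using that(2) by (intro F0(3)) (auto simp: P_def)
      ultimately
      have "norm (sum f (x - F0) - sum f (y - F0)) < e"
        using norm_triangle_ineq4[of "sum f (x - F0)" "sum f (y - F0)"] by linarith
      then show ?thesis by (simp add: dist_norm x y)
    qed
    then show "\<exists>P. eventually P (finite_subsets_at_top A) \<and> (\<forall>x y. P x \<and> P y \<longrightarrow> dist (sum f x) (sum f y) < e)"
      using ev by blast
  qed
  have "\<exists>c. ?F \<le> nhds c"
  proof (rule cauchy_filter_complete_converges[OF cf complete_UNIV])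
    show "?F \<le> principal UNIV" by simp
    show "?F \<noteq> bot" by (simp add: filtermap_bot_iff finite_subsets_at_top_neq_bot)
  qed
  then obtain c where "?F \<le> nhds c" by blast
  then have "(sum f \<longlongrightarrow> c) (finite_subsets_at_top A)" by (simp add: filterlim_def)
  then show ?thesis by (auto simp: summable_on_def has_sum_def)
qed

lemma amgm_aux:
  fixes b c p :: real
  assumes "b > 0"
  shows "c * p \<le> (b * c\<^sup>2 + p\<^sup>2 / b) / 2"
proof -
  have "0 \<le> (b * c - p)\<^sup>2" by simp
  then have "2 * b * (c * p) \<le> b\<^sup>2 * c\<^sup>2 + p\<^sup>2" by (simp add: power2_eq_square algebra_simps)
  then show ?thesis using assms by (simp add: field_simps power2_eq_square)
qed

lemma synth_fin:
  fixes f :: "'i \<Rightarrow> 'a::real_inner"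
  assumes sV: "subspace V" and fV: "\<forall>l\<in>\<Lambda>. f l \<in> V"
    and up: "\<forall>x\<in>V. (\<lambda>l. (inner x (f l))\<^sup>2) summable_on \<Lambda> \<and> (\<Sum>\<^sub>\<infinity>l\<in>\<Lambda>. (inner x (f l))\<^sup>2) \<le> b * (norm x)\<^sup>2"
    and b: "0 < b" and G: "finite G" "G \<subseteq> \<Lambda>"
  shows "(norm (\<Sum>l\<in>G. c l *\<^sub>R f l))\<^sup>2 \<le> b * (\<Sum>l\<in>G. (c l)\<^sup>2)"
proof -
  define w where "w = (\<Sum>l\<in>G. c l *\<^sub>R f l)"
  define C where "C = (\<Sum>l\<in>G. (c l)\<^sup>2)"
  define P where "P = (\<Sum>l\<in>G. (inner w (f l))\<^sup>2)"
  define N where "N = (norm w)\<^sup>2"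
  have wV: "w \<in> V" unfolding w_def using G fV sV by (intro subspace_sum subspace_scale) auto
  have P1: "P \<le> (\<Sum>\<^sub>\<infinity>l\<in>\<Lambda>. (inner w (f l))\<^sup>2)"
    unfolding P_def using up wV G by (intro fin_le_infsum) auto
  have P2: "(\<Sum>\<^sub>\<infinity>l\<in>\<Lambda>. (inner w (f l))\<^sup>2) \<le> b * N"
    using up wV by (simp add: N_def)
  have PN: "P / b \<le> N" using P1 P2 b by (simp add: pos_divide_le_eq mult.commute)
  have "N = (\<Sum>l\<in>G. c l * inner w (f l))"
    by (simp add: N_def power2_norm_eq_inner w_def inner_sum_left inner_commute)
  also have "\<dots> \<le> (\<Sum>l\<in>G. (b * (c l)\<^sup>2 + (inner w (f l))\<^sup>2 / b) / 2)"
    by (intro sum_mono amgm_aux b)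
  also have "\<dots> = (b * C + P / b) / 2"
    by (simp add: C_def P_def sum_divide_distrib sum_distrib_left sum.distrib add_divide_distrib)
  finally have "N \<le> (b * C + P / b) / 2" .
  then have "2 * N \<le> b * C + P / b" by simp
  then have "N \<le> b * C" using PN by linarith
  then show ?thesis by (simp add: N_def C_def w_def)
qed

lemma bessel_all:
  fixes f :: "'i \<Rightarrow> 'a::real_inner"
  assumes sV: "subspace V" and fV: "\<forall>l\<in>\<Lambda>. f l \<in> V"
    and up: "\<forall>x\<in>V. (\<lambda>l. (inner x (f l))\<^sup>2) summable_on \<Lambda> \<and> (\<Sum>\<^sub>\<infinity>l\<in>\<Lambda>. (inner x (f l))\<^sup>2) \<le> b * (norm x)\<^sup>2"
    and b: "0 < b"
  shows "(\<lambda>l. (inner z (f l))\<^sup>2) summable_on \<Lambda> \<and> (\<Sum>\<^sub>\<infinity>l\<in>\<Lambda>. (inner z (f l))\<^sup>2) \<le> b * (norm z)\<^sup>2"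
proof -
  have fin: "(\<Sum>l\<in>G. (inner z (f l))\<^sup>2) \<le> b * (norm z)\<^sup>2" if G: "finite G" "G \<subseteq> \<Lambda>" for G
  proof -
    define S where "S = (\<Sum>l\<in>G. (inner z (f l))\<^sup>2)"
    define w where "w = (\<Sum>l\<in>G. inner z (f l) *\<^sub>R f l)"
    have S0: "0 \<le> S" unfolding S_def by (simp add: sum_nonneg)
    have "S = inner z w" by (simp add: S_def w_def inner_sum_right power2_eq_square)
    also have "\<dots> \<le> norm z * norm w" by (rule norm_cauchy_schwarz)
    finally have S1: "S \<le> norm z * norm w" .
    have S2: "S\<^sup>2 \<le> (norm z * norm w)\<^sup>2" using S0 S1 by (intro power_mono) auto
    have W: "(norm w)\<^sup>2 \<le> b * S"
      unfolding w_def S_def by (rule synth_fin[OF sV fV up b G])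
    have "(norm z * norm w)\<^sup>2 = (norm z)\<^sup>2 * (norm w)\<^sup>2" by (simp add: power_mult_distrib)
    also have "\<dots> \<le> (norm z)\<^sup>2 * (b * S)" using W by (intro mult_left_mono) auto
    finally have "S * S \<le> (b * (norm z)\<^sup>2) * S" using S2 by (simp add: power2_eq_square algebra_simps)
    moreover have "0 \<le> b * (norm z)\<^sup>2" using b by (simp add: zero_le_mult_iff)
    ultimately show ?thesis
      using S0 unfolding S_def[symmetric] by (cases "S = 0") (auto intro: mult_right_le_imp_le)
  qed
  have sm: "(\<lambda>l. (inner z (f l))\<^sup>2) summable_on \<Lambda>"
    by (rule nonneg_bdd_above_summable_on) (use fin in \<open>auto intro!: bdd_aboveI2\<close>)
  moreover have "(\<Sum>\<^sub>\<infinity>l\<in>\<Lambda>. (inner z (f l))\<^sup>2) \<le> b * (norm z)\<^sup>2"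
    by (rule infsum_le_finite_sums[OF sm fin])
  ultimately show ?thesis by blast
qed

lemma synth_summable:
  fixes f :: "'i \<Rightarrow> 'a::{real_inner,complete_space}"
  assumes sV: "subspace V" and fV: "\<forall>l\<in>\<Lambda>. f l \<in> V"
    and up: "\<forall>x\<in>V. (\<lambda>l. (inner x (f l))\<^sup>2) summable_on \<Lambda> \<and> (\<Sum>\<^sub>\<infinity>l\<in>\<Lambda>. (inner x (f l))\<^sup>2) \<le> b * (norm x)\<^sup>2"
    and b: "0 < b" and c: "(\<lambda>l. (c l)\<^sup>2) summable_on \<Lambda>"
  shows "(\<lambda>l. c l *\<^sub>R f l) summable_on \<Lambda>"
proof (rule summable_cauchy)
  fix e :: real assume e: "e > 0"
  then have "e\<^sup>2 / b > 0" using b by simp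
  then obtain F0 where F0: "finite F0" "F0 \<subseteq> \<Lambda>" "\<And>G. finite G \<Longrightarrow> G \<subseteq> \<Lambda> - F0 \<Longrightarrow> (\<Sum>l\<in>G. (c l)\<^sup>2) < e\<^sup>2 / b"
    using tail_small[OF c, of "e\<^sup>2 / b"] by auto
  show "\<exists>F0. finite F0 \<and> F0 \<subseteq> \<Lambda> \<and> (\<forall>G. finite G \<longrightarrow> G \<subseteq> \<Lambda> - F0 \<longrightarrow> norm (\<Sum>l\<in>G. c l *\<^sub>R f l) < e)"
  proof (intro exI[of _ F0] conjI allI impI F0(1,2))
    fix G assume G: "finite G" "G \<subseteq> \<Lambda> - F0"
    have "(norm (\<Sum>l\<in>G. c l *\<^sub>R f l))\<^sup>2 \<le> b * (\<Sum>l\<in>G. (c l)\<^sup>2)"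
      using G by (intro synth_fin[OF sV fV up b]) auto
    also have "\<dots> < b * (e\<^sup>2 / b)" by (rule mult_strict_left_mono[OF F0(3)[OF G] b])
    also have "\<dots> = e\<^sup>2" using b by simp
    finally have X: "(norm (\<Sum>l\<in>G. c l *\<^sub>R f l))\<^sup>2 < e\<^sup>2" .
    show "norm (\<Sum>l\<in>G. c l *\<^sub>R f l) < e"
      using e by (intro power2_less_imp_less[OF X]) simp
  qed
qed



lemma subspace_closure_rv:
  fixes S :: "'a::real_normed_vector set"
  assumes "subspace S"
  shows "subspace (closure S)"
  unfolding subspace_def
proof (intro conjI ballI allI)
  show "0 \<in> closure S" using assms subspace_0 closure_subset by blast
next
  fix x y assume x: "x \<in> closure S" and y: "y \<in> closure S"
  obtain f where f: "\<And>n. f n \<in> S" "f \<longlonglongrightarrow> x" using x unfolding closure_sequential by blast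
  obtain g where g: "\<And>n. g n \<in> S" "g \<longlonglongrightarrow> y" using y unfolding closure_sequential by blast
  have "(\<lambda>n. f n + g n) \<longlonglongrightarrow> x + y" by (intro tendsto_intros f g)
  moreover have "\<And>n. f n + g n \<in> S" using f g assms subspace_add by blast
  ultimately show "x + y \<in> closure S" unfolding closure_sequential by (intro exI[of _ "\<lambda>n. f n + g n"]) simp
next
  fix c :: real and x assume x: "x \<in> closure S"
  obtain f where f: "\<And>n. f n \<in> S" "f \<longlonglongrightarrow> x" using x unfolding closure_sequential by blast
  have "(\<lambda>n. c *\<^sub>R f n) \<longlonglongrightarrow> c *\<^sub>R x" by (intro tendsto_intros f)
  moreover have "\<And>n. c *\<^sub>R f n \<in> S" using f assms subspace_scale by blast
  ultimately show "c *\<^sub>R x \<in> closure S" unfolding closure_sequential by (intro exI[of _ "\<lambda>n. c *\<^sub>R f n"]) simp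
qed

lemma abs_prod_le:
  fixes a b \<epsilon> :: real
  assumes "\<epsilon> > 0"
  shows "\<bar>a * b\<bar> \<le> (\<epsilon> * a\<^sup>2 + b\<^sup>2 / \<epsilon>) / 2"
proof -
  have "\<bar>a\<bar> * \<bar>b\<bar> \<le> (\<epsilon> * \<bar>a\<bar>\<^sup>2 + \<bar>b\<bar>\<^sup>2 / \<epsilon>) / 2" by (rule amgm_aux[OF assms])
  then show ?thesis by (simp add: abs_mult)
qed

lemma prod_abs_summable:
  fixes a b :: "'i \<Rightarrow> real"
  assumes "(\<lambda>l. (a l)\<^sup>2) summable_on A" "(\<lambda>l. (b l)\<^sup>2) summable_on A"
  shows "(\<lambda>l. \<bar>a l * b l\<bar>) summable_on A"
proof (rule summable_on_comparison_test)
  show "(\<lambda>l. (1/2) * ((a l)\<^sup>2 + (b l)\<^sup>2)) summable_on A"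
    using assms by (intro summable_on_cmult_right summable_on_add)
  show "\<bar>a l * b l\<bar> \<le> (1/2) * ((a l)\<^sup>2 + (b l)\<^sup>2)" for l
    using abs_prod_le[of 1 "a l" "b l"] by simp
qed auto

lemma prod_summable:
  fixes a b :: "'i \<Rightarrow> real"
  assumes "(\<lambda>l. (a l)\<^sup>2) summable_on A" "(\<lambda>l. (b l)\<^sup>2) summable_on A"
  shows "(\<lambda>l. a l * b l) summable_on A"
  by (rule abs_summable_summable) (use prod_abs_summable[OF assms] in simp)



lemma lin_aux: "2 * (a::real) < X \<Longrightarrow> X \<le> Y + a \<Longrightarrow> X \<le> 2 * Y" by linarith

lemma coeff_bound:
  fixes f :: "real \<Rightarrow> real" and \<kappa> \<alpha> x yv d e N :: real
  assumes \<kappa>: "\<kappa> > 0" and \<alpha>: "\<alpha> > 0" and d: "d > 0" and e: "e > 0"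
    and lip: "\<bar>f x\<bar> \<le> \<bar>x\<bar>"
    and B2: "\<bar>x\<bar> \<le> d * \<alpha> / \<kappa> \<Longrightarrow> \<bar>f x\<bar> \<le> e * \<kappa> / sqrt \<alpha> * \<bar>x\<bar>"
    and N: "(x - yv)\<^sup>2 \<le> N"
  shows "(f x / \<kappa>)\<^sup>2 \<le> 4 * (yv / \<kappa>)\<^sup>2 + (4 * e\<^sup>2 / \<alpha>) * (x - yv)\<^sup>2 + (16 * N / (d\<^sup>2 * \<alpha>\<^sup>2)) * (x - yv)\<^sup>2"
proof -
  define n where "n = x - yv"
  have N0: "0 \<le> N" using order_trans[OF zero_le_power2 N] .
  have t1: "0 \<le> 4 * (yv / \<kappa>)\<^sup>2" by simp
  have t2: "0 \<le> (4 * e\<^sup>2 / \<alpha>) * n\<^sup>2" using \<alpha> by simp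
  have t3: "0 \<le> (16 * N / (d\<^sup>2 * \<alpha>\<^sup>2)) * n\<^sup>2" using N0 by simp
  have fk0: "(\<bar>f x\<bar> / \<kappa>)\<^sup>2 = \<bar>f x / \<kappa>\<bar>\<^sup>2" using \<kappa> by (simp only: abs_divide abs_of_pos)
  have fk: "(f x / \<kappa>)\<^sup>2 = (\<bar>f x\<bar> / \<kappa>)\<^sup>2" unfolding fk0 by (simp only: power2_abs)
  have main: "(\<bar>f x\<bar> / \<kappa>)\<^sup>2 \<le> 4 * (yv / \<kappa>)\<^sup>2 + (4 * e\<^sup>2 / \<alpha>) * n\<^sup>2 + (16 * N / (d\<^sup>2 * \<alpha>\<^sup>2)) * n\<^sup>2"
  proof (cases "\<bar>x\<bar> > 2 * \<bar>n\<bar>")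
    case True
    moreover have "\<bar>x\<bar> \<le> \<bar>yv\<bar> + \<bar>x - yv\<bar>" using abs_triangle_ineq[of yv "x - yv"] by simp
    ultimately have "\<bar>x\<bar> \<le> 2 * \<bar>yv\<bar>" unfolding n_def by (rule lin_aux)
    then have "\<bar>f x\<bar> / \<kappa> \<le> 2 * \<bar>yv\<bar> / \<kappa>" using lip \<kappa> by (simp add: divide_right_mono)
    then have "(\<bar>f x\<bar> / \<kappa>)\<^sup>2 \<le> (2 * \<bar>yv\<bar> / \<kappa>)\<^sup>2" using \<kappa> by (intro power_mono) auto
    also have "\<dots> = 4 * (yv / \<kappa>)\<^sup>2" by (simp add: power2_eq_square)
    finally show ?thesis using t2 t3 by linarith
  next
    case False
    then have xn: "\<bar>x\<bar> \<le> 2 * \<bar>n\<bar>" by simp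
    show ?thesis
    proof (cases "\<bar>x\<bar> \<le> d * \<alpha> / \<kappa>")
      case True
      then have "\<bar>f x\<bar> \<le> e * \<kappa> / sqrt \<alpha> * \<bar>x\<bar>" by (rule B2)
      then have "\<bar>f x\<bar> / \<kappa> \<le> e / sqrt \<alpha> * \<bar>x\<bar>" using \<kappa> by (simp add: field_simps)
      also have "\<dots> \<le> e / sqrt \<alpha> * (2 * \<bar>n\<bar>)" using xn e \<alpha> by (intro mult_left_mono) auto
      finally have "(\<bar>f x\<bar> / \<kappa>)\<^sup>2 \<le> (e / sqrt \<alpha> * (2 * \<bar>n\<bar>))\<^sup>2" using \<kappa> by (intro power_mono) auto
      also have "\<dots> = (4 * e\<^sup>2 / \<alpha>) * n\<^sup>2" using \<alpha> by (simp add: power_mult_distrib power_divide)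
      finally show ?thesis using t1 t3 by linarith
    next
      case False
      then have "d * \<alpha> / \<kappa> < \<bar>x\<bar>" by simp
      then have ik: "1 / \<kappa> < \<bar>x\<bar> / (d * \<alpha>)" using d \<alpha> \<kappa> by (simp add: field_simps)
      have "\<bar>f x\<bar> / \<kappa> \<le> \<bar>x\<bar> * (1 / \<kappa>)" using lip \<kappa> by (simp add: divide_right_mono)
      also have "\<dots> \<le> \<bar>x\<bar> * (\<bar>x\<bar> / (d * \<alpha>))" using ik by (intro mult_left_mono) auto
      also have "\<dots> = x\<^sup>2 / (d * \<alpha>)" by (simp add: power2_eq_square)
      also have "\<dots> \<le> (4 * n\<^sup>2) / (d * \<alpha>)"
      proof -
        have "\<bar>x\<bar>\<^sup>2 \<le> (2 * \<bar>n\<bar>)\<^sup>2" by (rule power_mono[OF xn]) simp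
        then have "x\<^sup>2 \<le> (2 * \<bar>n\<bar>)\<^sup>2" by simp
        then have "x\<^sup>2 \<le> 4 * n\<^sup>2" by (simp add: power_mult_distrib)
        then show ?thesis using d \<alpha> by (intro divide_right_mono) auto
      qed
      finally have "(\<bar>f x\<bar> / \<kappa>)\<^sup>2 \<le> ((4 * n\<^sup>2) / (d * \<alpha>))\<^sup>2" using \<kappa> by (intro power_mono) auto
      also have "\<dots> = (16 / (d\<^sup>2 * \<alpha>\<^sup>2)) * n\<^sup>2 * n\<^sup>2" by (simp add: power2_eq_square algebra_simps)
      also have "\<dots> \<le> (16 / (d\<^sup>2 * \<alpha>\<^sup>2)) * n\<^sup>2 * N"
        using N d \<alpha> unfolding n_def by (intro mult_left_mono) auto
      also have "\<dots> = (16 * N / (d\<^sup>2 * \<alpha>\<^sup>2)) * n\<^sup>2" by simp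
      finally show ?thesis using t1 t2 by linarith
    qed
  qed
  show ?thesis using main fk unfolding n_def by simp
qed



lemma weak_l2:
  fixes c :: "nat \<Rightarrow> 'i \<Rightarrow> real" and c0 g :: "'i \<Rightarrow> real"
  assumes cs: "\<And>k. (\<lambda>l. (c k l)\<^sup>2) summable_on \<Lambda>"
    and cM: "\<And>k. (\<Sum>\<^sub>\<infinity>l\<in>\<Lambda>. (c k l)\<^sup>2) \<le> M"
    and c0: "(\<lambda>l. (c0 l)\<^sup>2) summable_on \<Lambda>"
    and g: "(\<lambda>l. (g l)\<^sup>2) summable_on \<Lambda>"
    and pw: "\<And>l. l \<in> \<Lambda> \<Longrightarrow> (\<lambda>k. c k l) \<longlonglongrightarrow> c0 l"
  shows "(\<lambda>k. \<Sum>\<^sub>\<infinity>l\<in>\<Lambda>. c k l * g l) \<longlonglongrightarrow> (\<Sum>\<^sub>\<infinity>l\<in>\<Lambda>. c0 l * g l)"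
proof -
  define D where "D k l = c k l - c0 l" for k l
  define C0 where "C0 = (\<Sum>\<^sub>\<infinity>l\<in>\<Lambda>. (c0 l)\<^sup>2)"
  define M' where "M' = 2 * M + 2 * C0"
  have dsq: "(D k l)\<^sup>2 \<le> 2 * (c k l)\<^sup>2 + 2 * (c0 l)\<^sup>2" for k l
  proof -
    have "0 \<le> (c k l + c0 l)\<^sup>2" by simp
    then show ?thesis by (simp add: D_def power2_eq_square algebra_simps)
  qed
  have dom: "(\<lambda>l. 2 * (c k l)\<^sup>2 + 2 * (c0 l)\<^sup>2) summable_on \<Lambda>" for k
    using cs c0 by (intro summable_on_add summable_on_cmult_right)
  have Ds: "(\<lambda>l. (D k l)\<^sup>2) summable_on \<Lambda>" for k
    by (rule summable_on_comparison_test[OF dom]) (use dsq in auto)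
  have DM: "(\<Sum>\<^sub>\<infinity>l\<in>\<Lambda>. (D k l)\<^sup>2) \<le> M'" for k
  proof -
    have "(\<Sum>\<^sub>\<infinity>l\<in>\<Lambda>. (D k l)\<^sup>2) \<le> (\<Sum>\<^sub>\<infinity>l\<in>\<Lambda>. 2 * (c k l)\<^sup>2 + 2 * (c0 l)\<^sup>2)"
      by (rule infsum_mono[OF Ds dom]) (rule dsq)
    also have "\<dots> = 2 * (\<Sum>\<^sub>\<infinity>l\<in>\<Lambda>. (c k l)\<^sup>2) + 2 * C0"
      unfolding C0_def
      by (subst infsum_add) (use cs c0 in \<open>auto intro: summable_on_cmult_right simp: infsum_cmult_right\<close>)
    also have "\<dots> \<le> M'" using cM[of k] by (simp add: M'_def)
    finally show ?thesis .
  qed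
  have M'0: "0 \<le> M'" using DM[of 0] infsum_nonneg[of \<Lambda> "\<lambda>l. (D 0 l)\<^sup>2"] by simp
  have Dg: "(\<lambda>l. D k l * g l) summable_on \<Lambda>" for k by (rule prod_summable[OF Ds g])
  have c0g: "(\<lambda>l. c0 l * g l) summable_on \<Lambda>" by (rule prod_summable[OF c0 g])
  have eq: "(\<Sum>\<^sub>\<infinity>l\<in>\<Lambda>. c k l * g l) = (\<Sum>\<^sub>\<infinity>l\<in>\<Lambda>. D k l * g l) + (\<Sum>\<^sub>\<infinity>l\<in>\<Lambda>. c0 l * g l)" for k
  proof -
    have "(\<Sum>\<^sub>\<infinity>l\<in>\<Lambda>. c k l * g l) = (\<Sum>\<^sub>\<infinity>l\<in>\<Lambda>. D k l * g l + c0 l * g l)"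
      by (simp add: D_def algebra_simps)
    also have "\<dots> = (\<Sum>\<^sub>\<infinity>l\<in>\<Lambda>. D k l * g l) + (\<Sum>\<^sub>\<infinity>l\<in>\<Lambda>. c0 l * g l)"
      by (rule infsum_add[OF Dg c0g])
    finally show ?thesis .
  qed
  have lim0: "(\<lambda>k. \<Sum>\<^sub>\<infinity>l\<in>\<Lambda>. D k l * g l) \<longlonglongrightarrow> 0"
  proof (rule LIMSEQ_I)
    fix \<eta> :: real assume \<eta>: "0 < \<eta>"
    define \<epsilon> where "\<epsilon> = \<eta> / (2 * (M' + 1))"
    have \<epsilon>: "0 < \<epsilon>" using \<eta> M'0 by (simp add: \<epsilon>_def)
    define t where "t = \<epsilon> * \<eta> / 2"
    have t: "0 < t" using \<epsilon> \<eta> by (simp add: t_def)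
    obtain F0 where F0: "finite F0" "F0 \<subseteq> \<Lambda>" "\<And>G. finite G \<Longrightarrow> G \<subseteq> \<Lambda> - F0 \<Longrightarrow> (\<Sum>l\<in>G. (g l)\<^sup>2) < t"
      using tail_small[OF g _ t] by auto
    have gsub: "(\<lambda>l. (g l)\<^sup>2) summable_on (\<Lambda> - F0)" using g by (rule summable_on_subset_banach) auto
    have Dsub: "(\<lambda>l. (D k l)\<^sup>2) summable_on (\<Lambda> - F0)" for k using Ds by (rule summable_on_subset_banach) auto
    have T: "(\<Sum>\<^sub>\<infinity>l\<in>\<Lambda> - F0. (g l)\<^sup>2) \<le> t"
      by (rule infsum_le_finite_sums[OF gsub]) (use F0(3) in \<open>auto intro: less_imp_le\<close>)
    have Dl: "(\<lambda>k. D k l) \<longlonglongrightarrow> 0" if "l \<in> \<Lambda>" for l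
      using tendsto_diff[OF pw[OF that] tendsto_const[of "c0 l"]] by (simp add: D_def)
    have fin: "(\<lambda>k. \<Sum>l\<in>F0. D k l * g l) \<longlonglongrightarrow> (\<Sum>l\<in>F0. 0 * g l)"
      by (intro tendsto_sum tendsto_mult Dl tendsto_const) (use F0(2) in auto)
    then have fin': "(\<lambda>k. \<Sum>l\<in>F0. D k l * g l) \<longlonglongrightarrow> 0" by simp
    have "\<exists>K. \<forall>k\<ge>K. norm ((\<Sum>l\<in>F0. D k l * g l) - 0) < \<eta> / 2"
      by (rule LIMSEQ_D[OF fin']) (use \<eta> in simp)
    then obtain K where K: "\<And>k. k \<ge> K \<Longrightarrow> norm ((\<Sum>l\<in>F0. D k l * g l) - 0) < \<eta> / 2"
      by blast
    show "\<exists>no. \<forall>n\<ge>no. norm ((\<Sum>\<^sub>\<infinity>l\<in>\<Lambda>. D n l * g l) - 0) < \<eta>"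
    proof (intro exI allI impI)
      fix k assume k: "K \<le> k"
      have split: "(\<Sum>\<^sub>\<infinity>l\<in>\<Lambda>. D k l * g l) = (\<Sum>l\<in>F0. D k l * g l) + (\<Sum>\<^sub>\<infinity>l\<in>\<Lambda> - F0. D k l * g l)"
      proof -
        have "\<Lambda> = F0 \<union> (\<Lambda> - F0)" using F0(2) by auto
        then have "(\<Sum>\<^sub>\<infinity>l\<in>\<Lambda>. D k l * g l) = (\<Sum>\<^sub>\<infinity>l\<in>F0 \<union> (\<Lambda> - F0). D k l * g l)" by simp
        also have "\<dots> = (\<Sum>\<^sub>\<infinity>l\<in>F0. D k l * g l) + (\<Sum>\<^sub>\<infinity>l\<in>\<Lambda> - F0. D k l * g l)"
          by (rule infsum_Un_disjoint) (use F0(1) prod_summable[OF Dsub gsub] in auto)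
        finally show ?thesis using F0(1) by simp
      qed
      have absS: "(\<lambda>l. \<bar>D k l * g l\<bar>) summable_on (\<Lambda> - F0)" by (rule prod_abs_summable[OF Dsub gsub])
      have bnd: "(\<lambda>l. (\<epsilon>/2) * (D k l)\<^sup>2 + (1/(2*\<epsilon>)) * (g l)\<^sup>2) summable_on (\<Lambda> - F0)"
        using Dsub gsub by (intro summable_on_add summable_on_cmult_right)
      have "\<bar>\<Sum>\<^sub>\<infinity>l\<in>\<Lambda> - F0. D k l * g l\<bar> \<le> (\<Sum>\<^sub>\<infinity>l\<in>\<Lambda> - F0. \<bar>D k l * g l\<bar>)"
        using norm_infsum_bound[of "\<lambda>l. D k l * g l" "\<Lambda> - F0"] absS by simp
      also have "\<dots> \<le> (\<Sum>\<^sub>\<infinity>l\<in>\<Lambda> - F0. (\<epsilon>/2) * (D k l)\<^sup>2 + (1/(2*\<epsilon>)) * (g l)\<^sup>2)"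
      proof (rule infsum_mono[OF absS bnd])
        fix l
        show "\<bar>D k l * g l\<bar> \<le> (\<epsilon>/2) * (D k l)\<^sup>2 + (1/(2*\<epsilon>)) * (g l)\<^sup>2"
          using abs_prod_le[OF \<epsilon>, of "D k l" "g l"] by (simp add: field_simps)
      qed
      also have "\<dots> = (\<epsilon>/2) * (\<Sum>\<^sub>\<infinity>l\<in>\<Lambda> - F0. (D k l)\<^sup>2) + (1/(2*\<epsilon>)) * (\<Sum>\<^sub>\<infinity>l\<in>\<Lambda> - F0. (g l)\<^sup>2)"
        unfolding infsum_add[OF summable_on_cmult_right[OF Dsub] summable_on_cmult_right[OF gsub]]
        by (simp only: infsum_cmult_right')
      also have "\<dots> \<le> (\<epsilon>/2) * M' + (1/(2*\<epsilon>)) * t"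
      proof (rule add_mono)
        have "(\<Sum>\<^sub>\<infinity>l\<in>\<Lambda> - F0. (D k l)\<^sup>2) \<le> (\<Sum>\<^sub>\<infinity>l\<in>\<Lambda>. (D k l)\<^sup>2)"
          by (rule infsum_mono_neutral[OF Dsub Ds]) auto
        then have "(\<Sum>\<^sub>\<infinity>l\<in>\<Lambda> - F0. (D k l)\<^sup>2) \<le> M'" using DM[of k] by linarith
        then show "(\<epsilon>/2) * (\<Sum>\<^sub>\<infinity>l\<in>\<Lambda> - F0. (D k l)\<^sup>2) \<le> (\<epsilon>/2) * M'"
          using \<epsilon> by (intro mult_left_mono) auto
        show "(1/(2*\<epsilon>)) * (\<Sum>\<^sub>\<infinity>l\<in>\<Lambda> - F0. (g l)\<^sup>2) \<le> (1/(2*\<epsilon>)) * t"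
          using T \<epsilon> by (intro mult_left_mono) auto
      qed
      also have "(1/(2*\<epsilon>)) * t = \<eta> / 4" using \<epsilon> by (simp add: t_def)
      also have "(\<epsilon>/2) * M' < \<eta> / 4"
      proof -
        have "(\<epsilon>/2) * M' = \<eta> * M' / (4 * (M' + 1))" using M'0 by (simp add: \<epsilon>_def field_simps)
        also have "\<dots> < \<eta> / 4" using M'0 \<eta> by (simp add: field_simps)
        finally show ?thesis .
      qed
      finally have tl: "\<bar>\<Sum>\<^sub>\<infinity>l\<in>\<Lambda> - F0. D k l * g l\<bar> < \<eta> / 4 + \<eta> / 4" by simp
      have "\<bar>\<Sum>l\<in>F0. D k l * g l\<bar> < \<eta> / 2" using K[OF k] by simp
      then have "\<bar>(\<Sum>l\<in>F0. D k l * g l) + (\<Sum>\<^sub>\<infinity>l\<in>\<Lambda> - F0. D k l * g l)\<bar> < \<eta>"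
        using tl abs_triangle_ineq[of "\<Sum>l\<in>F0. D k l * g l" "\<Sum>\<^sub>\<infinity>l\<in>\<Lambda> - F0. D k l * g l"] by linarith
      then show "norm ((\<Sum>\<^sub>\<infinity>l\<in>\<Lambda>. D k l * g l) - 0) < \<eta>" by (simp add: split)
    qed
  qed
  have "(\<lambda>k. (\<Sum>\<^sub>\<infinity>l\<in>\<Lambda>. D k l * g l) + (\<Sum>\<^sub>\<infinity>l\<in>\<Lambda>. c0 l * g l)) \<longlonglongrightarrow> 0 + (\<Sum>\<^sub>\<infinity>l\<in>\<Lambda>. c0 l * g l)"
    by (intro tendsto_add lim0 tendsto_const)
  then show ?thesis by (simp add: eq)
qed



lemma frame_upper:
  assumes "is_frame V f \<Lambda>"
  shows "\<exists>b>0. (\<forall>l\<in>\<Lambda>. f l \<in> V) \<and>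
    (\<forall>x\<in>V. (\<lambda>l. (inner x (f l))\<^sup>2) summable_on \<Lambda> \<and> (\<Sum>\<^sub>\<infinity>l\<in>\<Lambda>. (inner x (f l))\<^sup>2) \<le> b * (norm x)\<^sup>2)"
proof -
  obtain a b where ab: "0 < a" "a \<le> b"
    and h: "\<forall>x\<in>V. (\<lambda>l. (inner x (f l))\<^sup>2) summable_on \<Lambda> \<and>
        a * (norm x)\<^sup>2 \<le> (\<Sum>\<^sub>\<infinity>l\<in>\<Lambda>. (inner x (f l))\<^sup>2) \<and>
        (\<Sum>\<^sub>\<infinity>l\<in>\<Lambda>. (inner x (f l))\<^sup>2) \<le> b * (norm x)\<^sup>2"
    and fV: "\<forall>l\<in>\<Lambda>. f l \<in> V"
    using assms unfolding is_frame_def by blast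
  have "0 < b" using ab by linarith
  then show ?thesis using h fV by blast
qed

lemma subspace_orth_compl: "subspace (orth_compl W)"
  unfolding subspace_def orth_compl_def by (auto simp: inner_add_left)

lemma subspace_range_lin:
  assumes "linear A"
  shows "subspace (range A)"
  unfolding subspace_def
proof (intro conjI ballI allI)
  show "0 \<in> range A" using linear_0[OF assms] by (metis rangeI)
  fix x y assume "x \<in> range A" "y \<in> range A"
  then obtain a b where "x = A a" "y = A b" by blast
  then have "x + y = A (a + b)" using linear_add[OF assms] by simp
  then show "x + y \<in> range A" by simp
next
  fix c :: real and x assume "x \<in> range A"
  then obtain a where "x = A a" by blast
  then have "c *\<^sub>R x = A (c *\<^sub>R a)" using linear_scale[OF assms] by simp
  then show "c *\<^sub>R x \<in> range A" by simp
qed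



theorem theorem4p11:
  fixes A :: "'x::{real_inner, complete_space} \<Rightarrow> 'y::{real_inner, complete_space}"
    and \<Lambda> :: "'i set" and u ub :: "'i \<Rightarrow> 'x" and v :: "'i \<Rightarrow> 'y" and \<kappa> :: "'i \<Rightarrow> real"
    and \<phi> :: "real \<Rightarrow> real \<Rightarrow> real \<Rightarrow> real"
    and \<delta> \<alpha> :: "nat \<Rightarrow> real" and y :: 'y and yk :: "nat \<Rightarrow> 'y" and \<alpha>t :: real
  assumes "bounded_linear A"
    and "is_DFD A \<Lambda> u v \<kappa>"
    and "bdd_above (\<kappa> ` \<Lambda>)"
    and "is_dual_frame (orth_compl (ker A)) \<Lambda> u ub"
    and "nonlinear_reg_filter \<phi>"
    and "assumption_B \<phi>"
    and "\<forall>k. 0 < \<delta> k" and "\<delta> \<longlonglongrightarrow> 0"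
    and "\<forall>k. 0 < \<alpha> k" and "\<alpha> \<longlonglongrightarrow> 0"
    and "(\<lambda>k. (\<delta> k)\<^sup>2 / \<alpha> k) \<longlonglongrightarrow> 0"
    and "y \<in> range A"
    and "0 < \<alpha>t"
    and "\<exists>c\<in>l2 \<Lambda>. \<forall>l\<in>\<Lambda>. inner y (v l) = \<phi> \<alpha>t (\<kappa> l) (c l)"
    and "\<forall>k. norm (yk k - y) \<le> \<delta> k"
  shows "(\<forall>k. yk k \<in> B_dom \<phi> \<Lambda> v \<kappa> (\<alpha> k)) \<and>
         weakly_converges (\<lambda>k. B_op \<phi> \<Lambda> ub v \<kappa> (\<alpha> k) (yk k)) (mp_inverse A y)"
proof -
  define V where "V = orth_compl (ker A)"
  define W where "W = closure (range A)"
  have lin: "linear A" using assms(1) by (rule bounded_linear.linear)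
  have frU: "is_frame V u \<Lambda>" and frV: "is_frame W v \<Lambda>"
    and kap: "\<forall>l\<in>\<Lambda>. 0 < \<kappa> l \<and> (\<forall>x. inner (A x) (v l) = \<kappa> l * inner x (u l))"
    using assms(2) unfolding is_DFD_def V_def W_def by auto
  have frUB: "is_frame V ub \<Lambda>" and dual: "\<forall>x\<in>V. ((\<lambda>l. inner x (u l) *\<^sub>R ub l) has_sum x) \<Lambda>"
    using assms(4) unfolding is_dual_frame_def V_def by auto
  have sV: "subspace V" unfolding V_def by (rule subspace_orth_compl)
  have sW: "subspace W" unfolding W_def by (intro subspace_closure_rv subspace_range_lin lin)
  obtain bu where bu: "bu > 0" "\<forall>l\<in>\<Lambda>. u l \<in> V"
    "\<forall>x\<in>V. (\<lambda>l. (inner x (u l))\<^sup>2) summable_on \<Lambda> \<and> (\<Sum>\<^sub>\<infinity>l\<in>\<Lambda>. (inner x (u l))\<^sup>2) \<le> bu * (norm x)\<^sup>2"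
    using frame_upper[OF frU] by blast
  obtain bv where bv: "bv > 0" "\<forall>l\<in>\<Lambda>. v l \<in> W"
    "\<forall>x\<in>W. (\<lambda>l. (inner x (v l))\<^sup>2) summable_on \<Lambda> \<and> (\<Sum>\<^sub>\<infinity>l\<in>\<Lambda>. (inner x (v l))\<^sup>2) \<le> bv * (norm x)\<^sup>2"
    using frame_upper[OF frV] by blast
  obtain bb where bb: "bb > 0" "\<forall>l\<in>\<Lambda>. ub l \<in> V"
    "\<forall>x\<in>V. (\<lambda>l. (inner x (ub l))\<^sup>2) summable_on \<Lambda> \<and> (\<Sum>\<^sub>\<infinity>l\<in>\<Lambda>. (inner x (ub l))\<^sup>2) \<le> bb * (norm x)\<^sup>2"
    using frame_upper[OF frUB] by blast
  have besv: "(\<lambda>l. (inner z (v l))\<^sup>2) summable_on \<Lambda> \<and> (\<Sum>\<^sub>\<infinity>l\<in>\<Lambda>. (inner z (v l))\<^sup>2) \<le> bv * (norm z)\<^sup>2" for z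
    by (rule bessel_all[OF sW bv(2) bv(3) bv(1)])
  have besub: "(\<lambda>l. (inner z (ub l))\<^sup>2) summable_on \<Lambda>" for z
    using bessel_all[OF sV bb(2) bb(3) bb(1)] by blast

  obtain x0 where x0: "y = A x0" using assms(12) by blast
  have sK: "subspace (ker A)"
    unfolding subspace_def ker_def using linear_0[OF lin] linear_add[OF lin] linear_scale[OF lin] by auto
  have cK: "closed (ker A)"
    unfolding ker_def by (intro closed_Collect_eq linear_continuous_on assms(1) continuous_on_const)
  obtain q where qK: "q \<in> ker A" and qo: "\<forall>w\<in>ker A. inner (x0 - q) w = 0"
    using proj_exists[OF sK cK, of x0] by blast
  define p where "p = x0 - q"
  have pV: "p \<in> V" using qo unfolding V_def orth_compl_def p_def by blast
  have Ap: "A p = y" using qK x0 linear_diff[OF lin] unfolding p_def ker_def by simp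
  have mp: "mp_inverse A y = p"
    unfolding mp_inverse_def
  proof (rule the_equality)
    show "p \<in> orth_compl (ker A) \<and> A p - y \<in> orth_compl (range A)"
      using pV Ap unfolding V_def by (simp add: orth_compl_def)
  next
    fix x assume x: "x \<in> orth_compl (ker A) \<and> A x - y \<in> orth_compl (range A)"
    have "A x - y = A (x - p)" using Ap linear_diff[OF lin] by simp
    then have "inner (A x - y) (A x - y) = 0" using x unfolding orth_compl_def by auto
    then have "A (x - p) = 0" using \<open>A x - y = A (x - p)\<close> by simp
    then have xk: "x - p \<in> ker A" by (simp add: ker_def)
    have "x - p \<in> V" using x pV sV unfolding V_def by (simp add: subspace_diff)
    then have "inner (x - p) (x - p) = 0" using xk unfolding V_def orth_compl_def by blast
    then show "x = p" by simp
  qed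

  define cp where "cp l = inner p (u l)" for l
  have cp2: "(\<lambda>l. (cp l)\<^sup>2) summable_on \<Lambda>" using bu(3) pV unfolding cp_def by blast
  have yv: "inner y (v l) = \<kappa> l * cp l" if "l \<in> \<Lambda>" for l
    using kap that Ap unfolding cp_def by metis
  have kpos: "0 < \<kappa> l" if "l \<in> \<Lambda>" for l using kap that by blast
  have cpk: "inner y (v l) / \<kappa> l = cp l" if "l \<in> \<Lambda>" for l
    using yv[OF that] kpos[OF that] by simp

  have F13: "\<forall>a \<kappa>'. 0 < a \<longrightarrow> 0 < \<kappa>' \<longrightarrow> mono (\<phi> a \<kappa>') \<and>
       (\<forall>x y. \<bar>\<phi> a \<kappa>' x - \<phi> a \<kappa>' y\<bar> \<le> \<bar>x - y\<bar>) \<and> \<phi> a \<kappa>' 0 = 0"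
    and F4: "\<forall>\<kappa>' c. 0 < \<kappa>' \<longrightarrow> ((\<lambda>a. \<phi> a \<kappa>' c) \<longlongrightarrow> c) (at_right 0)"
    using assms(5) unfolding nonlinear_reg_filter_def by blast+
  have lipd: "\<bar>\<phi> a \<kappa>' s - \<phi> a \<kappa>' t\<bar> \<le> \<bar>s - t\<bar>" if "0 < a" "0 < \<kappa>'" for a \<kappa>' s t
    using F13 that by blast
  have lip0: "\<bar>\<phi> a \<kappa>' s\<bar> \<le> \<bar>s\<bar>" if "0 < a" "0 < \<kappa>'" for a \<kappa>' s
    using lipd[OF that, of s 0] F13 that by simp
  obtain d e where de: "0 < d" "0 < e"
    and B2: "\<And>\<kappa>' a s. 0 < \<kappa>' \<Longrightarrow> 0 < a \<Longrightarrow> \<bar>s\<bar> \<le> d * a / \<kappa>' \<Longrightarrow> \<bar>\<phi> a \<kappa>' s\<bar> \<le> e * \<kappa>' / sqrt a * \<bar>s\<bar>"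
    using assms(6) unfolding assumption_B_def by blast

  have \<alpha>pos: "0 < \<alpha> k" for k using assms(9) by blast
  have \<delta>pos: "0 < \<delta> k" for k using assms(7) by blast

  define ck where "ck k l = filt_coeffs \<phi> v \<kappa> (\<alpha> k) (yk k) l" for k l
  have ck_def': "ck k l = \<phi> (\<alpha> k) (\<kappa> l) (inner (yk k) (v l)) / \<kappa> l" for k l
    by (simp add: ck_def filt_coeffs_def)
  define nk where "nk k l = inner (yk k) (v l) - inner y (v l)" for k l
  have nk_eq: "nk k l = inner (yk k - y) (v l)" for k l by (simp add: nk_def inner_diff_left)
  have nsum: "(\<lambda>l. (nk k l)\<^sup>2) summable_on \<Lambda>" for k
    using besv[of "yk k - y"] by (simp add: nk_eq)
  have nsumle: "(\<Sum>\<^sub>\<infinity>l\<in>\<Lambda>. (nk k l)\<^sup>2) \<le> bv * (\<delta> k)\<^sup>2" for k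
  proof -
    have "(norm (yk k - y))\<^sup>2 \<le> (\<delta> k)\<^sup>2" using assms(15) by (intro power_mono) auto
    then have "bv * (norm (yk k - y))\<^sup>2 \<le> bv * (\<delta> k)\<^sup>2" using bv(1) by (intro mult_left_mono) auto
    then show ?thesis using besv[of "yk k - y"] by (simp add: nk_eq)
  qed
  have nl: "(nk k l)\<^sup>2 \<le> bv * (\<delta> k)\<^sup>2" if "l \<in> \<Lambda>" for k l
  proof -
    have "(\<Sum>l\<in>{l}. (nk k l)\<^sup>2) \<le> (\<Sum>\<^sub>\<infinity>l\<in>\<Lambda>. (nk k l)\<^sup>2)"
      by (rule fin_le_infsum[OF nsum]) (use that in auto)
    then show ?thesis using nsumle[of k] by simp
  qed

  define Rk where "Rk k = 4 * e\<^sup>2 / \<alpha> k" for k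
  define Sk where "Sk k = 16 * (bv * (\<delta> k)\<^sup>2) / (d\<^sup>2 * (\<alpha> k)\<^sup>2)" for k
  have Rk0: "0 \<le> Rk k" for k using \<alpha>pos[of k] by (simp add: Rk_def)
  have Sk0: "0 \<le> Sk k" for k using bv(1) by (simp add: Sk_def)
  have cb: "(ck k l)\<^sup>2 \<le> 4 * (cp l)\<^sup>2 + Rk k * (nk k l)\<^sup>2 + Sk k * (nk k l)\<^sup>2" if l: "l \<in> \<Lambda>" for k l
  proof -
    have "(\<phi> (\<alpha> k) (\<kappa> l) (inner (yk k) (v l)) / \<kappa> l)\<^sup>2 \<le>
      4 * (inner y (v l) / \<kappa> l)\<^sup>2 + (4 * e\<^sup>2 / \<alpha> k) * (inner (yk k) (v l) - inner y (v l))\<^sup>2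
      + (16 * (bv * (\<delta> k)\<^sup>2) / (d\<^sup>2 * (\<alpha> k)\<^sup>2)) * (inner (yk k) (v l) - inner y (v l))\<^sup>2"
    proof (rule coeff_bound[OF kpos[OF l] \<alpha>pos de])
      show "\<bar>\<phi> (\<alpha> k) (\<kappa> l) (inner (yk k) (v l))\<bar> \<le> \<bar>inner (yk k) (v l)\<bar>"
        by (rule lip0[OF \<alpha>pos kpos[OF l]])
      show "\<bar>\<phi> (\<alpha> k) (\<kappa> l) (inner (yk k) (v l))\<bar> \<le> e * \<kappa> l / sqrt (\<alpha> k) * \<bar>inner (yk k) (v l)\<bar>"
        if "\<bar>inner (yk k) (v l)\<bar> \<le> d * \<alpha> k / \<kappa> l"
        by (rule B2[OF kpos[OF l] \<alpha>pos that])
      show "(inner (yk k) (v l) - inner y (v l))\<^sup>2 \<le> bv * (\<delta> k)\<^sup>2"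
        using nl[OF l, of k] by (simp add: nk_def)
    qed
    then show ?thesis using cpk[OF l] by (simp add: ck_def' Rk_def Sk_def nk_def)
  qed
  have domsum: "(\<lambda>l. 4 * (cp l)\<^sup>2 + Rk k * (nk k l)\<^sup>2 + Sk k * (nk k l)\<^sup>2) summable_on \<Lambda>" for k
    using cp2 nsum[of k] by (intro summable_on_add summable_on_cmult_right)
  have ck2: "(\<lambda>l. (ck k l)\<^sup>2) summable_on \<Lambda>" for k
    by (rule summable_on_comparison_test[OF domsum]) (use cb in auto)
  define Cp where "Cp = (\<Sum>\<^sub>\<infinity>l\<in>\<Lambda>. (cp l)\<^sup>2)"
  define r where "r k = (\<delta> k)\<^sup>2 / \<alpha> k" for k
  have r0: "0 \<le> r k" for k using \<alpha>pos[of k] by (simp add: r_def)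
  have ck2le: "(\<Sum>\<^sub>\<infinity>l\<in>\<Lambda>. (ck k l)\<^sup>2) \<le> 4 * Cp + 4 * e\<^sup>2 * bv * r k + 16 * bv\<^sup>2 / d\<^sup>2 * (r k)\<^sup>2" for k
  proof -
    have "(\<Sum>\<^sub>\<infinity>l\<in>\<Lambda>. (ck k l)\<^sup>2) \<le> (\<Sum>\<^sub>\<infinity>l\<in>\<Lambda>. 4 * (cp l)\<^sup>2 + Rk k * (nk k l)\<^sup>2 + Sk k * (nk k l)\<^sup>2)"
      by (rule infsum_mono[OF ck2 domsum]) (rule cb)
    also have "\<dots> = 4 * Cp + Rk k * (\<Sum>\<^sub>\<infinity>l\<in>\<Lambda>. (nk k l)\<^sup>2) + Sk k * (\<Sum>\<^sub>\<infinity>l\<in>\<Lambda>. (nk k l)\<^sup>2)"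
      unfolding Cp_def
      by (simp only: infsum_add[OF summable_on_add[OF summable_on_cmult_right[OF cp2] summable_on_cmult_right[OF nsum]] summable_on_cmult_right[OF nsum]]
          infsum_add[OF summable_on_cmult_right[OF cp2] summable_on_cmult_right[OF nsum]] infsum_cmult_right')
    also have "\<dots> \<le> 4 * Cp + Rk k * (bv * (\<delta> k)\<^sup>2) + Sk k * (bv * (\<delta> k)\<^sup>2)"
      using nsumle[of k] Rk0[of k] Sk0[of k] by (intro add_mono mult_left_mono order_refl)
    also have "Rk k * (bv * (\<delta> k)\<^sup>2) = 4 * e\<^sup>2 * bv * r k"
      using \<alpha>pos[of k] by (simp add: Rk_def r_def field_simps)
    also have "Sk k * (bv * (\<delta> k)\<^sup>2) = 16 * bv\<^sup>2 / d\<^sup>2 * (r k)\<^sup>2"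
      using \<alpha>pos[of k] de by (simp add: Sk_def r_def field_simps power2_eq_square)
    finally show ?thesis .
  qed
  have "Bseq r" unfolding r_def using assms(11) by (intro convergent_imp_Bseq convergentI)
  then obtain R where R: "0 < R" "\<And>k. norm (r k) \<le> R" by (auto elim!: BseqE)
  define M where "M = 4 * Cp + 4 * e\<^sup>2 * bv * R + 16 * bv\<^sup>2 / d\<^sup>2 * R\<^sup>2"
  have ckM: "(\<Sum>\<^sub>\<infinity>l\<in>\<Lambda>. (ck k l)\<^sup>2) \<le> M" for k
  proof -
    have rR: "r k \<le> R" using R(2)[of k] r0[of k] by simp
    have "4 * e\<^sup>2 * bv * r k \<le> 4 * e\<^sup>2 * bv * R" using rR bv(1) by (intro mult_left_mono) auto
    moreover have "(r k)\<^sup>2 \<le> R\<^sup>2" using rR r0[of k] by (intro power_mono) auto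
    then have "16 * bv\<^sup>2 / d\<^sup>2 * (r k)\<^sup>2 \<le> 16 * bv\<^sup>2 / d\<^sup>2 * R\<^sup>2" by (intro mult_left_mono) auto
    ultimately show ?thesis using ck2le[of k] by (simp add: M_def)
  qed

  have dom: "yk k \<in> B_dom \<phi> \<Lambda> v \<kappa> (\<alpha> k)" for k
  proof -
    have a: "(\<lambda>l. (\<phi> (\<alpha> k) (\<kappa> l) (inner (yk k) (v l)))\<^sup>2) summable_on \<Lambda>"
    proof (rule summable_on_comparison_test)
      show "(\<lambda>l. (inner (yk k) (v l))\<^sup>2) summable_on \<Lambda>" using besv by blast
      show "(\<phi> (\<alpha> k) (\<kappa> l) (inner (yk k) (v l)))\<^sup>2 \<le> (inner (yk k) (v l))\<^sup>2" if "l \<in> \<Lambda>" for l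
        using lip0[OF \<alpha>pos kpos[OF that]] by (simp add: abs_le_square_iff)
    qed auto
    have b: "(\<lambda>l. (filt_coeffs \<phi> v \<kappa> (\<alpha> k) (yk k) l)\<^sup>2) summable_on \<Lambda>"
      using ck2[of k] by (simp add: ck_def)
    show ?thesis using a b by (simp add: B_dom_def l2_def)
  qed

  have \<alpha>lim: "filterlim \<alpha> (at_right 0) sequentially"
  proof -
    have "\<forall>k. \<alpha> k \<in> {0<..} \<and> \<alpha> k \<noteq> 0"
    proof
      fix k show "\<alpha> k \<in> {0<..} \<and> \<alpha> k \<noteq> 0" using \<alpha>pos[of k] by simp
    qed
    then show ?thesis unfolding filterlim_at using assms(10) by (simp add: always_eventually)
  qed
  have pw: "(\<lambda>k. ck k l) \<longlonglongrightarrow> cp l" if l: "l \<in> \<Lambda>" for l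
  proof -
    have L1: "(\<lambda>k. \<phi> (\<alpha> k) (\<kappa> l) (inner y (v l))) \<longlonglongrightarrow> inner y (v l)"
      using filterlim_compose[OF F4[rule_format, OF kpos[OF l]] \<alpha>lim] .
    have L2: "(\<lambda>k. \<phi> (\<alpha> k) (\<kappa> l) (inner (yk k) (v l)) - \<phi> (\<alpha> k) (\<kappa> l) (inner y (v l))) \<longlonglongrightarrow> 0"
    proof (rule Lim_null_comparison)
      show "\<forall>\<^sub>F k in sequentially. norm (\<phi> (\<alpha> k) (\<kappa> l) (inner (yk k) (v l)) - \<phi> (\<alpha> k) (\<kappa> l) (inner y (v l))) \<le> \<delta> k * norm (v l)"
      proof (rule always_eventually, rule allI)
        fix k
        have "norm (\<phi> (\<alpha> k) (\<kappa> l) (inner (yk k) (v l)) - \<phi> (\<alpha> k) (\<kappa> l) (inner y (v l))) \<le> \<bar>inner (yk k) (v l) - inner y (v l)\<bar>"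
          using lipd[OF \<alpha>pos kpos[OF l]] by simp
        also have "\<dots> = \<bar>inner (yk k - y) (v l)\<bar>" by (simp add: inner_diff_left)
        also have "\<dots> \<le> norm (yk k - y) * norm (v l)" by (rule Cauchy_Schwarz_ineq2)
        also have "\<dots> \<le> \<delta> k * norm (v l)" using assms(15) by (intro mult_right_mono) auto
        finally show "norm (\<phi> (\<alpha> k) (\<kappa> l) (inner (yk k) (v l)) - \<phi> (\<alpha> k) (\<kappa> l) (inner y (v l))) \<le> \<delta> k * norm (v l)" .
      qed
      show "(\<lambda>k. \<delta> k * norm (v l)) \<longlonglongrightarrow> 0"
        using tendsto_mult[OF assms(8) tendsto_const[of "norm (v l)"]] by simp
    qed
    have "(\<lambda>k. (\<phi> (\<alpha> k) (\<kappa> l) (inner (yk k) (v l)) - \<phi> (\<alpha> k) (\<kappa> l) (inner y (v l)) + \<phi> (\<alpha> k) (\<kappa> l) (inner y (v l))) / \<kappa> l)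
        \<longlonglongrightarrow> (0 + inner y (v l)) / \<kappa> l"
      by (intro tendsto_divide tendsto_add L1 L2 tendsto_const) (use kpos[OF l] in simp)
    then show ?thesis using cpk[OF l] by (simp add: ck_def')
  qed

  have weak: "weakly_converges (\<lambda>k. B_op \<phi> \<Lambda> ub v \<kappa> (\<alpha> k) (yk k)) p"
    unfolding weakly_converges_def
  proof
    fix z
    define g where "g l = inner (ub l) z" for l
    have g2: "(\<lambda>l. (g l)\<^sup>2) summable_on \<Lambda>" using besub[of z] by (simp add: g_def inner_commute)
    have hl: "bounded_linear (\<lambda>x. inner x z)" by (rule bounded_linear_inner_left)
    have Bk: "inner (B_op \<phi> \<Lambda> ub v \<kappa> (\<alpha> k) (yk k)) z = (\<Sum>\<^sub>\<infinity>l\<in>\<Lambda>. ck k l * g l)" for k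
    proof -
      have sm: "(\<lambda>l. ck k l *\<^sub>R ub l) summable_on \<Lambda>"
        by (rule synth_summable[OF sV bb(2) bb(3) bb(1) ck2])
      have "((\<lambda>l. inner (ck k l *\<^sub>R ub l) z) has_sum inner (\<Sum>\<^sub>\<infinity>l\<in>\<Lambda>. ck k l *\<^sub>R ub l) z) \<Lambda>"
        by (rule has_sum_bounded_linear[OF hl has_sum_infsum[OF sm]])
      then have "(\<Sum>\<^sub>\<infinity>l\<in>\<Lambda>. ck k l * g l) = inner (\<Sum>\<^sub>\<infinity>l\<in>\<Lambda>. ck k l *\<^sub>R ub l) z"
        by (simp add: g_def infsumI)
      then show ?thesis by (simp add: B_op_def ck_def)
    qed
    have Pz: "inner p z = (\<Sum>\<^sub>\<infinity>l\<in>\<Lambda>. cp l * g l)"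
    proof -
      have "((\<lambda>l. inner (cp l *\<^sub>R ub l) z) has_sum inner p z) \<Lambda>"
        using has_sum_bounded_linear[OF hl] dual pV unfolding cp_def by blast
      then show ?thesis by (simp add: g_def infsumI)
    qed
    have "(\<lambda>k. \<Sum>\<^sub>\<infinity>l\<in>\<Lambda>. ck k l * g l) \<longlonglongrightarrow> (\<Sum>\<^sub>\<infinity>l\<in>\<Lambda>. cp l * g l)"
      by (rule weak_l2[OF ck2 ckM cp2 g2 pw])
    then show "(\<lambda>k. inner (B_op \<phi> \<Lambda> ub v \<kappa> (\<alpha> k) (yk k)) z) \<longlonglongrightarrow> inner p z"
      by (simp add: Bk Pz)
  qed
  show ?thesis using dom weak mp by simp
qed


end
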